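(* Consider a random family with random number of children $N\ge 1$ and sexes $S_1,S_2,\dots\in\{\mathrm{M},\mathrm{F}\}$ of its children in birth order ($S_k$ defined on the event $N\ge k$). Assume: (i) (random coin toss) there is $p_M\in(0,1)$ such that $P(S_1=\mathrm{M})=p_M$ and, for every $k\ge 2$, $P(S_k=\mathrm{M}\mid N\ge k, S_1,\dots,S_{k-1})=p_M$; write $p_F=1-p_M$; (ii) the sex of the first child does not predict whether the family has a second child: $P(N\ge 2\mid S_1=\mathrm{M})=P(N\ge2\mid S_1=\mathrm{F})$; (iii) there are numbers $p_S>0$ and $p_D$ with $P(N\ge 3\mid N\ge 2, S_1=S_2=\mathrm{M})=P(N\ge 3\mid N\ge 2, S_1=S_2=\mathrm{F})=p_S$ and $P(N\ge 3\mid N\ge 2, S_1=\mathrm{M},S_2=\mathrm{F})=P(N\ge 3\mid N\ge 2, S_1=\mathrm{F},S_2=\mathrm{M})=p_D$. Then \[ P\left(\text{MMM or FFF}\mid N\geq 3\right)=\left(p_M^3+p_F^3\right)\frac{1}{2 p_Fp_M p_D/p_S +p_F^2+p_M^2}. \] If additionally $p_S>p_D$, then the inflation factor satisfies \[ \frac{1}{2 p_Fp_M p_D/p_S +p_F^2+p_M^2}>1. \]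
   Context: All births are singletons. "MMM" denotes the event $N\ge 3$ and $S_1=S_2=S_3=\mathrm{M}$; "FFF" denotes $N\ge3$ and $S_1=S_2=S_3=\mathrm{F}$. All conditioning events appearing are assumed to have positive probability. *)

theory Defs
  imports "HOL-Probability.Probability"
begin

datatype sex = Male | Female

definition cond_prob :: "'a measure \<Rightarrow> 'a set \<Rightarrow> 'a set \<Rightarrow> real" where
  "cond_prob M A B = measure M (A \<inter> B) / measure M B"

end

theory Submission
  imports Defs
begin

lemma sex_neq_Male: "(x \<noteq> Male) = (x = Female)"
  by (cases x) auto

lemma split_sex:
  assumes "prob_space M" "{\<omega>\<in>space M. P \<omega>} \<in> sets M" "{\<omega>\<in>space M. f \<omega> = Male} \<in> sets M"
  shows "measure M {\<omega>\<in>space M. P \<omega>} =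
         measure M {\<omega>\<in>space M. P \<omega> \<and> f \<omega> = Male} + measure M {\<omega>\<in>space M. P \<omega> \<and> f \<omega> = Female}"
proof -
  have fm: "finite_measure M" using assms(1) by (rule prob_space.axioms(1))
  have eA: "{\<omega>\<in>space M. P \<omega> \<and> f \<omega> = Male} = {\<omega>\<in>space M. P \<omega>} \<inter> {\<omega>\<in>space M. f \<omega> = Male}"
    by blast
  have A: "{\<omega>\<in>space M. P \<omega> \<and> f \<omega> = Male} \<in> sets M"
    unfolding eA using assms(2,3) by (rule sets.Int)
  have eB: "{\<omega>\<in>space M. P \<omega> \<and> f \<omega> = Female} = {\<omega>\<in>space M. P \<omega>} - {\<omega>\<in>space M. f \<omega> = Male}"
    using sex_neq_Male by blast
  have B: "{\<omega>\<in>space M. P \<omega> \<and> f \<omega> = Female} \<in> sets M"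
    unfolding eB using assms(2,3) by (rule sets.Diff)
  have eq: "{\<omega>\<in>space M. P \<omega>} = {\<omega>\<in>space M. P \<omega> \<and> f \<omega> = Male} \<union> {\<omega>\<in>space M. P \<omega> \<and> f \<omega> = Female}"
    using sex_neq_Male by blast
  have dj: "{\<omega>\<in>space M. P \<omega> \<and> f \<omega> = Male} \<inter> {\<omega>\<in>space M. P \<omega> \<and> f \<omega> = Female} = {}"
    by auto
  show ?thesis unfolding eq[symmetric]
    using finite_measure.finite_measure_Union[OF fm A B dj] eq by simp
qed

theorem corollary1:
  fixes M :: "'a measure" and N :: "'a \<Rightarrow> nat" and S :: "nat \<Rightarrow> 'a \<Rightarrow> sex"
    and pM pS pD :: real
  assumes "prob_space M"
    and N_meas: "N \<in> measurable M (count_space UNIV)"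
    and S_meas: "\<And>k. S k \<in> measurable M (count_space UNIV)"
    and N_pos: "\<forall>\<omega>\<in>space M. N \<omega> \<ge> 1"
    and pM: "0 < pM" "pM < 1"
    and coin1: "measure M {\<omega>\<in>space M. S 1 \<omega> = Male} = pM"
    and coin: "\<And>k s. k \<ge> 2 \<Longrightarrow>
        measure M {\<omega>\<in>space M. N \<omega> \<ge> k \<and> (\<forall>i\<in>{1..<k}. S i \<omega> = s i)} > 0 \<Longrightarrow>
        cond_prob M {\<omega>\<in>space M. S k \<omega> = Male}
          {\<omega>\<in>space M. N \<omega> \<ge> k \<and> (\<forall>i\<in>{1..<k}. S i \<omega> = s i)} = pM"
    and second: "cond_prob M {\<omega>\<in>space M. N \<omega> \<ge> 2} {\<omega>\<in>space M. S 1 \<omega> = Male}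
               = cond_prob M {\<omega>\<in>space M. N \<omega> \<ge> 2} {\<omega>\<in>space M. S 1 \<omega> = Female}"
    and pos_MM: "measure M {\<omega>\<in>space M. N \<omega> \<ge> 2 \<and> S 1 \<omega> = Male \<and> S 2 \<omega> = Male} > 0"
    and pos_FF: "measure M {\<omega>\<in>space M. N \<omega> \<ge> 2 \<and> S 1 \<omega> = Female \<and> S 2 \<omega> = Female} > 0"
    and pos_MF: "measure M {\<omega>\<in>space M. N \<omega> \<ge> 2 \<and> S 1 \<omega> = Male \<and> S 2 \<omega> = Female} > 0"
    and pos_FM: "measure M {\<omega>\<in>space M. N \<omega> \<ge> 2 \<and> S 1 \<omega> = Female \<and> S 2 \<omega> = Male} > 0"
    and pos_3: "measure M {\<omega>\<in>space M. N \<omega> \<ge> 3} > 0"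
    and pS_pos: "pS > 0"
    and MM: "cond_prob M {\<omega>\<in>space M. N \<omega> \<ge> 3}
               {\<omega>\<in>space M. N \<omega> \<ge> 2 \<and> S 1 \<omega> = Male \<and> S 2 \<omega> = Male} = pS"
    and FF: "cond_prob M {\<omega>\<in>space M. N \<omega> \<ge> 3}
               {\<omega>\<in>space M. N \<omega> \<ge> 2 \<and> S 1 \<omega> = Female \<and> S 2 \<omega> = Female} = pS"
    and MF: "cond_prob M {\<omega>\<in>space M. N \<omega> \<ge> 3}
               {\<omega>\<in>space M. N \<omega> \<ge> 2 \<and> S 1 \<omega> = Male \<and> S 2 \<omega> = Female} = pD"
    and FM: "cond_prob M {\<omega>\<in>space M. N \<omega> \<ge> 3}
               {\<omega>\<in>space M. N \<omega> \<ge> 2 \<and> S 1 \<omega> = Female \<and> S 2 \<omega> = Male} = pD"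
  shows "cond_prob M
           {\<omega>\<in>space M. N \<omega> \<ge> 3 \<and>
              ((S 1 \<omega> = Male \<and> S 2 \<omega> = Male \<and> S 3 \<omega> = Male) \<or>
               (S 1 \<omega> = Female \<and> S 2 \<omega> = Female \<and> S 3 \<omega> = Female))}
           {\<omega>\<in>space M. N \<omega> \<ge> 3}
         = (pM ^ 3 + (1 - pM) ^ 3) *
           (1 / (2 * (1 - pM) * pM * pD / pS + (1 - pM) ^ 2 + pM ^ 2))
         \<and> (pS > pD \<longrightarrow> 1 / (2 * (1 - pM) * pM * pD / pS + (1 - pM) ^ 2 + pM ^ 2) > 1)"
proof -
  have fm: "finite_measure M" using assms(1) by (rule prob_space.axioms(1))
  have sp1: "measure M (space M) = 1" using prob_space.prob_space[OF assms(1)] .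
  note [measurable] = N_meas S_meas
  define X2 where "X2 a = measure M {\<omega>\<in>space M. N \<omega> \<ge> 2 \<and> S 1 \<omega> = a}" for a
  define Y2 where "Y2 a b = measure M {\<omega>\<in>space M. N \<omega> \<ge> 2 \<and> S 1 \<omega> = a \<and> S 2 \<omega> = b}" for a b
  define Y3 where "Y3 a b = measure M {\<omega>\<in>space M. N \<omega> \<ge> 3 \<and> S 1 \<omega> = a \<and> S 2 \<omega> = b}" for a b
  have F1: "measure M {\<omega>\<in>space M. S 1 \<omega> = Female} = 1 - pM"
  proof -
    have m1: "{\<omega>\<in>space M. True} \<in> sets M" by simp
    have m2: "{\<omega>\<in>space M. S 1 \<omega> = Male} \<in> sets M" by measurable
    have "measure M {\<omega>\<in>space M. True} = measure M {\<omega>\<in>space M. True \<and> S 1 \<omega> = Male}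
       + measure M {\<omega>\<in>space M. True \<and> S 1 \<omega> = Female}"
      by (rule split_sex[OF assms(1) m1 m2])
    moreover have "{\<omega>\<in>space M. True} = space M" by simp
    ultimately show ?thesis using coin1 sp1 by simp
  qed
  have e1: "{\<omega>\<in>space M. N \<omega> \<ge> 2} \<inter> {\<omega>\<in>space M. S 1 \<omega> = a} = {\<omega>\<in>space M. N \<omega> \<ge> 2 \<and> S 1 \<omega> = a}" for a
    by auto
  define q where "q = X2 Male / pM"
  have XM: "X2 Male = q * pM" using pM unfolding q_def by simp
  have XF: "X2 Female = q * (1 - pM)"
  proof -
    have "X2 Male / pM = X2 Female / (1 - pM)"
      using second F1 coin1 unfolding cond_prob_def X2_def e1 by simp
    then show ?thesis using pM unfolding q_def by (simp add: field_simps)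
  qed
  have X2s: "X2 a = Y2 a Male + Y2 a Female" for a
    unfolding X2_def Y2_def
    by (rule split_sex[OF assms(1), of "\<lambda>\<omega>. N \<omega> \<ge> 2 \<and> S 1 \<omega> = a" "S 2", simplified conj_assoc]) measurable
  have Y2pos: "Y2 a b > 0" for a b
    using pos_MM pos_MF pos_FM pos_FF unfolding Y2_def by (cases a; cases b) auto
  have c2: "Y2 a Male = pM * X2 a" for a
  proof -
    have se: "{\<omega>\<in>space M. N \<omega> \<ge> 2 \<and> (\<forall>i\<in>{1..<2}. S i \<omega> = (\<lambda>_. a) i)}
        = {\<omega>\<in>space M. N \<omega> \<ge> 2 \<and> S 1 \<omega> = a}"
    proof -
      have i2: "{1..<2::nat} = {1}" by auto
      show ?thesis unfolding i2 by auto
    qed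
    have pos: "X2 a > 0" using X2s[of a] Y2pos[of a] measure_nonneg
      by (metis add_pos_nonneg Y2_def)
    have "cond_prob M {\<omega>\<in>space M. S 2 \<omega> = Male} {\<omega>\<in>space M. N \<omega> \<ge> 2 \<and> S 1 \<omega> = a} = pM"
      using coin[of 2 "\<lambda>_. a"] pos unfolding se X2_def by simp
    moreover have "{\<omega>\<in>space M. S 2 \<omega> = Male} \<inter> {\<omega>\<in>space M. N \<omega> \<ge> 2 \<and> S 1 \<omega> = a}
       = {\<omega>\<in>space M. N \<omega> \<ge> 2 \<and> S 1 \<omega> = a \<and> S 2 \<omega> = Male}" by auto
    ultimately show ?thesis using pos unfolding cond_prob_def X2_def Y2_def
      by (simp add: field_simps)
  qed
  have c2F: "Y2 a Female = (1 - pM) * X2 a" for a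
    using X2s[of a] c2[of a] by (simp add: algebra_simps)
  have e3: "{\<omega>\<in>space M. N \<omega> \<ge> 3} \<inter> {\<omega>\<in>space M. N \<omega> \<ge> 2 \<and> S 1 \<omega> = a \<and> S 2 \<omega> = b}
      = {\<omega>\<in>space M. N \<omega> \<ge> 3 \<and> S 1 \<omega> = a \<and> S 2 \<omega> = b}" for a b by auto
  have Y3MM: "Y3 Male Male = pS * Y2 Male Male"
    using MM Y2pos[of Male Male] unfolding cond_prob_def e3 Y3_def Y2_def by (simp add: field_simps)
  have Y3FF: "Y3 Female Female = pS * Y2 Female Female"
    using FF Y2pos[of Female Female] unfolding cond_prob_def e3 Y3_def Y2_def by (simp add: field_simps)
  have Y3MF: "Y3 Male Female = pD * Y2 Male Female"
    using MF Y2pos[of Male Female] unfolding cond_prob_def e3 Y3_def Y2_def by (simp add: field_simps)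
  have Y3FM: "Y3 Female Male = pD * Y2 Female Male"
    using FM Y2pos[of Female Male] unfolding cond_prob_def e3 Y3_def Y2_def by (simp add: field_simps)
  have pD0: "pD \<ge> 0" using MF unfolding cond_prob_def by auto
  have P3a: "measure M {\<omega>\<in>space M. N \<omega> \<ge> 3} = measure M {\<omega>\<in>space M. N \<omega> \<ge> 3 \<and> S 1 \<omega> = Male}
     + measure M {\<omega>\<in>space M. N \<omega> \<ge> 3 \<and> S 1 \<omega> = Female}"
    by (rule split_sex[OF assms(1)]) measurable
  have P3b: "measure M {\<omega>\<in>space M. N \<omega> \<ge> 3 \<and> S 1 \<omega> = a} = Y3 a Male + Y3 a Female" for a
    unfolding Y3_def
    by (rule split_sex[OF assms(1), of "\<lambda>\<omega>. N \<omega> \<ge> 3 \<and> S 1 \<omega> = a" "S 2", simplified conj_assoc]) measurable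
  have P3: "measure M {\<omega>\<in>space M. N \<omega> \<ge> 3} = Y3 Male Male + Y3 Male Female + Y3 Female Male + Y3 Female Female"
    using P3a P3b[of Male] P3b[of Female] by simp
  have c3: "measure M {\<omega>\<in>space M. N \<omega> \<ge> 3 \<and> S 1 \<omega> = a \<and> S 2 \<omega> = a \<and> S 3 \<omega> = Male} = pM * Y3 a a"
    if pos: "Y3 a a > 0" for a
  proof -
    have i3: "{1..<3::nat} = {1,2}" by auto
    have se: "{\<omega>\<in>space M. N \<omega> \<ge> 3 \<and> (\<forall>i\<in>{1..<3}. S i \<omega> = (\<lambda>_. a) i)}
        = {\<omega>\<in>space M. N \<omega> \<ge> 3 \<and> S 1 \<omega> = a \<and> S 2 \<omega> = a}" unfolding i3 by auto
    have "cond_prob M {\<omega>\<in>space M. S 3 \<omega> = Male} {\<omega>\<in>space M. N \<omega> \<ge> 3 \<and> S 1 \<omega> = a \<and> S 2 \<omega> = a} = pM"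
      using coin[of 3 "\<lambda>_. a"] pos unfolding se Y3_def by simp
    moreover have "{\<omega>\<in>space M. S 3 \<omega> = Male} \<inter> {\<omega>\<in>space M. N \<omega> \<ge> 3 \<and> S 1 \<omega> = a \<and> S 2 \<omega> = a}
       = {\<omega>\<in>space M. N \<omega> \<ge> 3 \<and> S 1 \<omega> = a \<and> S 2 \<omega> = a \<and> S 3 \<omega> = Male}" by auto
    ultimately show ?thesis using pos unfolding cond_prob_def Y3_def
      by (simp add: field_simps)
  qed
  have P3F: "Y3 a a = measure M {\<omega>\<in>space M. N \<omega> \<ge> 3 \<and> S 1 \<omega> = a \<and> S 2 \<omega> = a \<and> S 3 \<omega> = Male}
     + measure M {\<omega>\<in>space M. N \<omega> \<ge> 3 \<and> S 1 \<omega> = a \<and> S 2 \<omega> = a \<and> S 3 \<omega> = Female}" for a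
    unfolding Y3_def
    by (rule split_sex[OF assms(1), of "\<lambda>\<omega>. N \<omega> \<ge> 3 \<and> S 1 \<omega> = a \<and> S 2 \<omega> = a" "S 3", simplified conj_assoc]) measurable
  have qpos: "q > 0"
  proof -
    have "0 < Y2 Male Male" by (rule Y2pos)
    also have "Y2 Male Male = pM * (q * pM)" using c2[of Male] XM by simp
    finally show ?thesis using pM by (simp add: zero_less_mult_iff)
  qed
  have Y2MM: "Y2 Male Male = q * pM^2" using c2[of Male] XM by (simp add: power2_eq_square)
  have Y2FF: "Y2 Female Female = q * (1-pM)^2" using c2F[of Female] XF by (simp add: power2_eq_square)
  have Y2MF: "Y2 Male Female = q * pM * (1-pM)" using c2F[of Male] XM by simp
  have Y2FM: "Y2 Female Male = q * pM * (1-pM)" using c2[of Female] XF by simp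
  have Y3MMpos: "Y3 Male Male > 0" using Y3MM Y2MM qpos pM pS_pos by simp
  have Y3FFpos: "Y3 Female Female > 0" using Y3FF Y2FF qpos pM pS_pos by simp
  have T: "measure M {\<omega>\<in>space M. N \<omega> \<ge> 3 \<and>
              ((S 1 \<omega> = Male \<and> S 2 \<omega> = Male \<and> S 3 \<omega> = Male) \<or>
               (S 1 \<omega> = Female \<and> S 2 \<omega> = Female \<and> S 3 \<omega> = Female))}
     = pM * Y3 Male Male + (1 - pM) * Y3 Female Female"
  proof -
    have eq: "{\<omega>\<in>space M. N \<omega> \<ge> 3 \<and>
              ((S 1 \<omega> = Male \<and> S 2 \<omega> = Male \<and> S 3 \<omega> = Male) \<or>
               (S 1 \<omega> = Female \<and> S 2 \<omega> = Female \<and> S 3 \<omega> = Female))}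
      = {\<omega>\<in>space M. N \<omega> \<ge> 3 \<and> S 1 \<omega> = Male \<and> S 2 \<omega> = Male \<and> S 3 \<omega> = Male}
        \<union> {\<omega>\<in>space M. N \<omega> \<ge> 3 \<and> S 1 \<omega> = Female \<and> S 2 \<omega> = Female \<and> S 3 \<omega> = Female}" by auto
    have "measure M ({\<omega>\<in>space M. N \<omega> \<ge> 3 \<and> S 1 \<omega> = Male \<and> S 2 \<omega> = Male \<and> S 3 \<omega> = Male}
        \<union> {\<omega>\<in>space M. N \<omega> \<ge> 3 \<and> S 1 \<omega> = Female \<and> S 2 \<omega> = Female \<and> S 3 \<omega> = Female})
      = measure M {\<omega>\<in>space M. N \<omega> \<ge> 3 \<and> S 1 \<omega> = Male \<and> S 2 \<omega> = Male \<and> S 3 \<omega> = Male}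
       + measure M {\<omega>\<in>space M. N \<omega> \<ge> 3 \<and> S 1 \<omega> = Female \<and> S 2 \<omega> = Female \<and> S 3 \<omega> = Female}"
      by (rule finite_measure.finite_measure_Union[OF fm]) (measurable, auto)
    moreover have "measure M {\<omega>\<in>space M. N \<omega> \<ge> 3 \<and> S 1 \<omega> = Female \<and> S 2 \<omega> = Female \<and> S 3 \<omega> = Female}
       = (1 - pM) * Y3 Female Female"
      using P3F[of Female] c3[OF Y3FFpos] by (simp add: algebra_simps)
    ultimately show ?thesis unfolding eq using c3[OF Y3MMpos] by simp
  qed
  have eT: "{\<omega>\<in>space M. N \<omega> \<ge> 3 \<and>
              ((S 1 \<omega> = Male \<and> S 2 \<omega> = Male \<and> S 3 \<omega> = Male) \<or>
               (S 1 \<omega> = Female \<and> S 2 \<omega> = Female \<and> S 3 \<omega> = Female))} \<inter> {\<omega>\<in>space M. N \<omega> \<ge> 3}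
      = {\<omega>\<in>space M. N \<omega> \<ge> 3 \<and>
              ((S 1 \<omega> = Male \<and> S 2 \<omega> = Male \<and> S 3 \<omega> = Male) \<or>
               (S 1 \<omega> = Female \<and> S 2 \<omega> = Female \<and> S 3 \<omega> = Female))}" by auto
  define D where "D = 2 * (1 - pM) * pM * pD / pS + (1 - pM) ^ 2 + pM ^ 2"
  have Dpos: "D > 0" unfolding D_def using pM pD0 pS_pos
    by (smt (verit) divide_nonneg_pos mult_nonneg_nonneg zero_less_power)
  have part1: "cond_prob M
           {\<omega>\<in>space M. N \<omega> \<ge> 3 \<and>
              ((S 1 \<omega> = Male \<and> S 2 \<omega> = Male \<and> S 3 \<omega> = Male) \<or>
               (S 1 \<omega> = Female \<and> S 2 \<omega> = Female \<and> S 3 \<omega> = Female))}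
           {\<omega>\<in>space M. N \<omega> \<ge> 3} = (pM ^ 3 + (1 - pM) ^ 3) * (1 / D)"
  proof -
    have "cond_prob M
           {\<omega>\<in>space M. N \<omega> \<ge> 3 \<and>
              ((S 1 \<omega> = Male \<and> S 2 \<omega> = Male \<and> S 3 \<omega> = Male) \<or>
               (S 1 \<omega> = Female \<and> S 2 \<omega> = Female \<and> S 3 \<omega> = Female))}
           {\<omega>\<in>space M. N \<omega> \<ge> 3}
       = (pM * (pS * (q * pM^2)) + (1 - pM) * (pS * (q * (1-pM)^2)))
         / (pS * (q * pM^2) + pD * (q * pM * (1-pM)) + pD * (q * pM * (1-pM)) + pS * (q * (1-pM)^2))"
      unfolding cond_prob_def eT T P3 Y3MM Y3FF Y3MF Y3FM Y2MM Y2FF Y2MF Y2FM by simp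
    also have "\<dots> = (q * pS * (pM ^ 3 + (1 - pM) ^ 3)) / (q * pS * D)"
    proof -
      have n: "pM * (pS * (q * pM^2)) + (1 - pM) * (pS * (q * (1-pM)^2)) = q * pS * (pM ^ 3 + (1 - pM) ^ 3)"
        by (simp add: power2_eq_square power3_eq_cube algebra_simps)
      have d: "pS * (q * pM^2) + pD * (q * pM * (1-pM)) + pD * (q * pM * (1-pM)) + pS * (q * (1-pM)^2) = q * pS * D"
        unfolding D_def using pS_pos by (simp add: field_simps power2_eq_square)
      show ?thesis unfolding n d ..
    qed
    also have "\<dots> = (pM ^ 3 + (1 - pM) ^ 3) * (1 / D)"
      using qpos pS_pos by simp
    finally show ?thesis .
  qed
  have part2: "1 / D > 1" if "pS > pD"
  proof -
    have "pD / pS < 1" using that pS_pos by simp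
    moreover have c: "0 < 2 * (1 - pM) * pM" using pM by simp
    ultimately have "2 * (1 - pM) * pM * (pD / pS) < 2 * (1 - pM) * pM * 1"
      by (intro mult_strict_left_mono)
    then have lt: "2 * (1 - pM) * pM * pD / pS < 2 * (1 - pM) * pM" by simp
    have "(1 - pM) ^ 2 + pM ^ 2 + 2 * (1 - pM) * pM = 1" by (simp add: power2_eq_square algebra_simps)
    then have "D < 1" unfolding D_def using lt by linarith
    then show ?thesis using Dpos by simp
  qed
  show ?thesis using part1 part2 unfolding D_def by blast
qed

end
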